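(* Let $r\ge2$ and $p\ge2$ be integers, let $\mathcal{A}$ be the adjacency tensor of an $r$-uniform (possibly weighted) hypergraph on $n$ vertices, and let $f(\mathbf{x})=(r-1)!\,\mathcal{A}\mathbf{x}^r/\|\mathbf{x}\|_p^r$ for $\mathbf{x}\neq0$. Let $\mathbf{x}_k\in\mathbb{R}^n$ with $\|\mathbf{x}_k\|_2=1$, $\mathbf{p}_k\in\mathbb{R}^n$, and for $\alpha>0$ let $$\mathbf{x}_{k+1}(\alpha)=\frac{[(2-\alpha\mathbf{x}_k^\top\mathbf{p}_k)^2-\|\alpha\mathbf{p}_k\|^2]\mathbf{x}_k+4\alpha\mathbf{p}_k}{4+\|\alpha\mathbf{p}_k\|^2-(\alpha\mathbf{x}_k^\top\mathbf{p}_k)^2}.$$ Writing $f'(\alpha)$ for the derivative of $\alpha\mapsto f(\mathbf{x}_{k+1}(\alpha))$, we have $$\alpha f'(\alpha)=-\nabla f(\mathbf{x}_{k+1}(\alpha))^\top\mathbf{x}_k.$$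
   Context: For a weighted $r$-uniform hypergraph $G=(V,E)$ with $V=\{1,\dots,n\}$ and edge weights $s(e)>0$, the adjacency tensor $\mathcal{A}=(a_{i_1\cdots i_r})$ is the symmetric order-$r$, dimension-$n$ tensor with $a_{i_1\cdots i_r}=s(e)/(r-1)!$ if $\{i_1,\dots,i_r\}=e\in E$ and $0$ otherwise. $\mathcal{A}\mathbf{x}^r=\sum_{i_1,\dots,i_r}a_{i_1\cdots i_r}x_{i_1}\cdots x_{i_r}$ and $(\mathcal{A}\mathbf{x}^{r-1})_i=\sum_{i_2,\dots,i_r}a_{ii_2\cdots i_r}x_{i_2}\cdots x_{i_r}$. $\|\mathbf{x}\|_p=(\sum_i|x_i|^p)^{1/p}$ and $\|\cdot\|$ is the Euclidean norm. The gradient is $\nabla f(\mathbf{x})=\frac{r!}{\|\mathbf{x}\|_p^r}\big(\mathcal{A}\mathbf{x}^{r-1}-\mathcal{A}\mathbf{x}^r\|\mathbf{x}\|_p^{-p}\mathbf{x}^{\langle p-1\rangle}\big)$, where $(\mathbf{x}^{\langle p-1\rangle})_i=|x_i|^{p-1}\mathrm{sgn}(x_i)$. The vector $\mathbf{x}_{k+1}(\alpha)$ is a unit vector. *)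

theory Defs
  imports "HOL-Analysis.Analysis"
begin

text \<open>Weighted r-uniform hypergraph on the vertex type 'n (vertices = elements of the
finite type 'n, so n = CARD('n)); edges E are r-element vertex sets, weights s e > 0.\<close>

definition weighted_uniform_hypergraph :: "nat \<Rightarrow> 'n set set \<Rightarrow> ('n set \<Rightarrow> real) \<Rightarrow> bool" where
  "weighted_uniform_hypergraph r E s \<longleftrightarrow> (\<forall>e\<in>E. card e = r \<and> s e > 0)"

definition adj_entry :: "nat \<Rightarrow> 'n set set \<Rightarrow> ('n set \<Rightarrow> real) \<Rightarrow> (nat \<Rightarrow> 'n) \<Rightarrow> real" where
  "adj_entry r E s i = (if i ` {0..<r} \<in> E then s (i ` {0..<r}) / fact (r - 1) else 0)"

definition tensor_form :: "nat \<Rightarrow> 'n::finite set set \<Rightarrow> ('n set \<Rightarrow> real) \<Rightarrow> real^'n \<Rightarrow> real" where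
  "tensor_form r E s x =
     (\<Sum>i\<in>PiE {0..<r} (\<lambda>_. UNIV). adj_entry r E s i * (\<Prod>j<r. x $ i j))"

definition tensor_vec :: "nat \<Rightarrow> 'n::finite set set \<Rightarrow> ('n set \<Rightarrow> real) \<Rightarrow> real^'n \<Rightarrow> real^'n" where
  "tensor_vec r E s x = (\<chi> v. \<Sum>i\<in>PiE {1..<r} (\<lambda>_. UNIV).
        adj_entry r E s (i(0 := v)) * (\<Prod>j\<in>{1..<r}. x $ i j))"

definition pnorm :: "nat \<Rightarrow> real^'n::finite \<Rightarrow> real" where
  "pnorm p x = (\<Sum>i\<in>UNIV. \<bar>x $ i\<bar> ^ p) powr (1 / real p)"

definition hyp_f :: "nat \<Rightarrow> nat \<Rightarrow> 'n::finite set set \<Rightarrow> ('n set \<Rightarrow> real) \<Rightarrow> real^'n \<Rightarrow> real" where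
  "hyp_f r p E s x = fact (r - 1) * tensor_form r E s x / pnorm p x ^ r"

definition hyp_grad :: "nat \<Rightarrow> nat \<Rightarrow> 'n::finite set set \<Rightarrow> ('n set \<Rightarrow> real) \<Rightarrow> real^'n \<Rightarrow> real^'n" where
  "hyp_grad r p E s x = (fact r / pnorm p x ^ r) *\<^sub>R
     (tensor_vec r E s x - (tensor_form r E s x / pnorm p x ^ p) *\<^sub>R
        (\<chi> i. \<bar>x $ i\<bar> ^ (p - 1) * sgn (x $ i)))"

definition x_next :: "real^'n::finite \<Rightarrow> real^'n \<Rightarrow> real \<Rightarrow> real^'n" where
  "x_next xk pk \<alpha> =
     (1 / (4 + (norm (\<alpha> *\<^sub>R pk))\<^sup>2 - (\<alpha> * (xk \<bullet> pk))\<^sup>2)) *\<^sub>R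
       ((((2 - \<alpha> * (xk \<bullet> pk))\<^sup>2 - (norm (\<alpha> *\<^sub>R pk))\<^sup>2) *\<^sub>R xk) + (4 * \<alpha>) *\<^sub>R pk)"

end

theory Submission
  imports Defs
begin


lemma abs_pow_deriv:
  assumes "p \<ge> 2"
  shows "((\<lambda>t::real. \<bar>t\<bar>^p) has_real_derivative (real p * \<bar>t\<bar>^(p-1) * sgn t)) (at t)"
proof (cases "t = 0")
  case True
  have lim: "((\<lambda>y::real. \<bar>y\<bar>^(p-1)) \<longlongrightarrow> 0) (at 0)"
  proof -
    have "((\<lambda>y::real. \<bar>y\<bar>^(p-1)) \<longlongrightarrow> \<bar>0\<bar>^(p-1)) (at 0)"
      by (intro tendsto_intros)
    moreover have "\<bar>0::real\<bar>^(p-1) = 0" using assms by simp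
    ultimately show ?thesis by metis
  qed
  have "((\<lambda>y::real. (\<bar>y\<bar>^p - \<bar>0\<bar>^p) / (y - 0)) \<longlongrightarrow> 0) (at 0)"
  proof (rule Lim_null_comparison[OF _ lim])
    show "\<forall>\<^sub>F y in at 0. norm ((\<bar>y\<bar>^p - \<bar>0\<bar>^p) / (y - 0)) \<le> \<bar>y\<bar>^(p-1)"
    proof (rule always_eventually, intro allI)
      fix y :: real
      have "\<bar>y\<bar>^p = \<bar>y\<bar>^(p-1) * \<bar>y\<bar>" using assms
        by (metis One_nat_def Suc_diff_1 le_trans one_le_numeral not_one_le_zero neq0_conv power_Suc2)
      then show "norm ((\<bar>y\<bar>^p - \<bar>0\<bar>^p) / (y - 0)) \<le> \<bar>y\<bar>^(p-1)" using assms
        by (cases "y = 0") (auto simp: abs_mult power_abs power_0_left)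
    qed
  qed
  then show ?thesis using True by (simp add: has_field_derivative_iff)
next
  case False
  show ?thesis
  proof (cases "t > 0")
    case True
    have "((\<lambda>t::real. t^p) has_real_derivative (real p * \<bar>t\<bar>^(p-1) * sgn t)) (at t)"
      using True by (auto intro!: derivative_eq_intros)
    then show ?thesis
      apply (rule has_field_derivative_transform_within_open[where S="{0<..}"])
      using True by auto
  next
    case f2: False
    with False have tn: "t < 0" by simp
    have "((\<lambda>t::real. (-t)^p) has_real_derivative (real p * \<bar>t\<bar>^(p-1) * sgn t)) (at t)"
      using tn by (auto intro!: derivative_eq_intros)
    then show ?thesis
      apply (rule has_field_derivative_transform_within_open[where S="{..<0}"])
      using tn by auto
  qed
qed



lemma split_sum:
  fixes F :: "(nat \<Rightarrow> 'n::finite) \<Rightarrow> real"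
  assumes "r \<ge> 1"
  shows "(\<Sum>i\<in>PiE {0..<r} (\<lambda>_. UNIV::'n set). F i) =
         (\<Sum>v\<in>UNIV. \<Sum>i\<in>PiE {1..<r} (\<lambda>_. UNIV::'n set). F (i(0:=v)))"
proof -
  have eq: "{0..<r} = insert 0 {1..<r}" using assms by auto
  have inj: "inj_on (\<lambda>(y, g). g(0 := y)) (UNIV \<times> PiE {1..<r} (\<lambda>_. UNIV::'n set))"
    using inj_combinator[of 0 "{1..<r}" "\<lambda>_. UNIV::'n set"] by simp
  have "(\<Sum>i\<in>PiE {0..<r} (\<lambda>_. UNIV::'n set). F i) =
        (\<Sum>i\<in>(\<lambda>(y, g). g(0 := y)) ` (UNIV \<times> PiE {1..<r} (\<lambda>_. UNIV::'n set)). F i)"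
    by (simp only: eq PiE_insert_eq)
  also have "\<dots> = (\<Sum>(y,g)\<in>UNIV \<times> PiE {1..<r} (\<lambda>_. UNIV::'n set). F (g(0:=y)))"
    by (subst sum.reindex[OF inj]) (simp add: case_prod_unfold)
  also have "\<dots> = (\<Sum>v\<in>UNIV. \<Sum>i\<in>PiE {1..<r} (\<lambda>_. UNIV::'n set). F (i(0:=v)))"
    by (rule sum.cartesian_product[symmetric])
  finally show ?thesis .
qed

definition swp :: "nat \<Rightarrow> nat \<Rightarrow> nat" where
  "swp j l = (if l = 0 then j else if l = j then 0 else l)"

lemma swp_swp[simp]: "swp j (swp j l) = l"
  by (simp add: swp_def)

lemma swp_in: "j < r \<Longrightarrow> l < r \<Longrightarrow> swp j l < r"
  by (simp add: swp_def)

lemma swp_image: assumes j: "j < r" shows "swp j ` {0..<r} = {0..<r}"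
proof (rule set_eqI)
  fix l
  show "l \<in> swp j ` {0..<r} \<longleftrightarrow> l \<in> {0..<r}"
  proof
    assume "l \<in> swp j ` {0..<r}"
    then obtain m where "m < r" "l = swp j m" by auto
    then show "l \<in> {0..<r}" using swp_in[OF j] by auto
  next
    assume "l \<in> {0..<r}"
    then have "swp j l \<in> {0..<r}" using swp_in[OF j] by auto
    then show "l \<in> swp j ` {0..<r}" by (rule image_eqI[rotated]) simp
  qed
qed

lemma swap_sum:
  fixes x h :: "real^'n::finite"
  assumes "j < r"
  shows "(\<Sum>i\<in>PiE {0..<r} (\<lambda>_. UNIV::'n set). adj_entry r E s i * h$(i j) * (\<Prod>l\<in>{..<r}-{j}. x$(i l)))
       = (\<Sum>i\<in>PiE {0..<r} (\<lambda>_. UNIV::'n set). adj_entry r E s i * h$(i 0) * (\<Prod>l\<in>{1..<r}. x$(i l)))"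
proof -
  have mem: "i \<circ> swp j \<in> PiE {0..<r} (\<lambda>_. UNIV::'n set)" if "i \<in> PiE {0..<r} (\<lambda>_. UNIV::'n set)" for i :: "nat \<Rightarrow> 'n"
    using assms that by (auto simp: PiE_iff extensional_def swp_def)
  have a: "adj_entry r E s (i \<circ> swp j) = adj_entry r E s i" for i :: "nat \<Rightarrow> 'n"
    unfolding adj_entry_def image_comp[symmetric] swp_image[OF assms] ..
  have c: "(\<Prod>l\<in>{1..<r}. x$(i (swp j l))) = (\<Prod>l\<in>{..<r}-{j}. x$(i l))" for i :: "nat \<Rightarrow> 'n"
    by (rule prod.reindex_bij_witness[of _ "swp j" "swp j"]) (use assms in \<open>auto simp: swp_def\<close>)
  have e: "adj_entry r E s (i \<circ> swp j) * h $ (i \<circ> swp j) 0 * (\<Prod>l\<in>{1..<r}. x $ (i \<circ> swp j) l) =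
        adj_entry r E s i * h $ i j * (\<Prod>l\<in>{..<r} - {j}. x $ i l)" for i :: "nat \<Rightarrow> 'n"
    unfolding a o_apply c by (simp add: swp_def)
  have ii: "i \<circ> swp j \<circ> swp j = i" for i :: "nat \<Rightarrow> 'n" by (auto simp: fun_eq_iff)
  show ?thesis
    by (rule sum.reindex_bij_witness[of _ "\<lambda>i. i \<circ> swp j" "\<lambda>i. i \<circ> swp j"]) (assumption | rule ii mem e)+
qed

lemma C_sum:
  fixes x h :: "real^'n::finite"
  assumes "r \<ge> 1"
  shows "(\<Sum>i\<in>PiE {0..<r} (\<lambda>_. UNIV::'n set). adj_entry r E s i * h$(i 0) * (\<Prod>l\<in>{1..<r}. x$(i l)))
        = tensor_vec r E s x \<bullet> h"
proof -
  have "(\<Sum>i\<in>PiE {0..<r} (\<lambda>_. UNIV::'n set). adj_entry r E s i * h$(i 0) * (\<Prod>l\<in>{1..<r}. x$(i l)))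
      = (\<Sum>v\<in>UNIV. \<Sum>i\<in>PiE {1..<r} (\<lambda>_. UNIV::'n set).
           adj_entry r E s (i(0:=v)) * h$v * (\<Prod>l\<in>{1..<r}. x$(i l)))"
    apply (subst split_sum[OF assms])
    apply (rule sum.cong[OF refl])+
    apply (rule arg_cong2[where f="(*)"])
     apply simp
    apply (rule prod.cong[OF refl])
    apply simp
    done
  also have "\<dots> = (\<Sum>v\<in>UNIV. tensor_vec r E s x $ v * h $ v)"
    by (auto simp: tensor_vec_def sum_distrib_right intro!: sum.cong)
  also have "\<dots> = tensor_vec r E s x \<bullet> h" by (simp add: inner_vec_def)
  finally show ?thesis .
qed

lemma deriv_sum_eq:
  fixes x h :: "real^'n::finite"
  assumes "r \<ge> 1"
  shows "(\<Sum>i\<in>PiE {0..<r} (\<lambda>_. UNIV::'n set). adj_entry r E s i * (\<Sum>l<r. h$(i l) * (\<Prod>m\<in>{..<r}-{l}. x$(i m))))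
        = real r * (tensor_vec r E s x \<bullet> h)"
proof -
  have "(\<Sum>i\<in>PiE {0..<r} (\<lambda>_. UNIV::'n set). adj_entry r E s i * (\<Sum>l<r. h$(i l) * (\<Prod>m\<in>{..<r}-{l}. x$(i m))))
      = (\<Sum>l<r. \<Sum>i\<in>PiE {0..<r} (\<lambda>_. UNIV::'n set). adj_entry r E s i * h$(i l) * (\<Prod>m\<in>{..<r}-{l}. x$(i m)))"
    by (subst sum.swap) (simp add: sum_distrib_left mult.assoc)
  also have "\<dots> = (\<Sum>l<r. tensor_vec r E s x \<bullet> h)"
  proof (rule sum.cong[OF refl])
    fix l assume "l \<in> {..<r}"
    then have l: "l < r" by simp
    show "(\<Sum>i\<in>PiE {0..<r} (\<lambda>_. UNIV::'n set). adj_entry r E s i * h$(i l) * (\<Prod>m\<in>{..<r}-{l}. x$(i m)))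
         = tensor_vec r E s x \<bullet> h"
      by (rule trans[OF swap_sum[OF l] C_sum[OF assms]])
  qed
  finally show ?thesis by simp
qed

lemma tensor_form_eq:
  fixes x :: "real^'n::finite"
  assumes "r \<ge> 1"
  shows "tensor_form r E s x = tensor_vec r E s x \<bullet> x"
proof -
  have eq: "{..<r} = insert 0 {1..<r}" using assms by auto
  show ?thesis
    unfolding tensor_form_def C_sum[OF assms, symmetric]
    by (rule sum.cong[OF refl]) (simp add: eq mult.assoc)
qed




lemma tensor_deriv:
  fixes x :: "real^'n::finite"
  assumes "r \<ge> 1"
  shows "(tensor_form r E s has_derivative (\<lambda>h. real r * (tensor_vec r E s x \<bullet> h))) (at x)"
proof -
  have "((\<lambda>x. tensor_form r E s x) has_derivative
     (\<lambda>h. \<Sum>i\<in>PiE {0..<r} (\<lambda>_. UNIV::'n set). adj_entry r E s i * (\<Sum>l<r. h$(i l) * (\<Prod>m\<in>{..<r}-{l}. x$(i m))))) (at x)"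
    unfolding tensor_form_def
    by (intro has_derivative_sum has_derivative_mult_right has_derivative_prod
        bounded_linear_imp_has_derivative bounded_linear_vec_nth)
  then show ?thesis by (simp add: deriv_sum_eq[OF assms])
qed

definition wvec :: "nat \<Rightarrow> real^'n::finite \<Rightarrow> real^'n" where
  "wvec p x = (\<chi> i. \<bar>x $ i\<bar> ^ (p - 1) * sgn (x $ i))"

lemma S_deriv:
  fixes x :: "real^'n::finite"
  assumes "p \<ge> 2"
  shows "((\<lambda>x. \<Sum>k\<in>UNIV. \<bar>x$k\<bar>^p) has_derivative (\<lambda>h. real p * (wvec p x \<bullet> h))) (at x)"
proof -
  have d: "((\<lambda>x. \<bar>x$k\<bar>^p) has_derivative (\<lambda>h. (real p * \<bar>x$k\<bar>^(p-1) * sgn (x$k)) * h$k)) (at x)" for k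
  proof -
    have "((\<lambda>t::real. \<bar>t\<bar>^p) has_derivative (\<lambda>t. (real p * \<bar>x$k\<bar>^(p-1) * sgn (x$k)) * t)) (at (x$k))"
      using abs_pow_deriv[OF assms, of "x$k"] by (simp add: has_field_derivative_def)
    from has_derivative_compose[OF bounded_linear_imp_has_derivative[OF bounded_linear_vec_nth] this]
    show ?thesis .
  qed
  have "((\<lambda>x. \<Sum>k\<in>UNIV. \<bar>x$k\<bar>^p) has_derivative (\<lambda>h. \<Sum>k\<in>UNIV. (real p * \<bar>x$k\<bar>^(p-1) * sgn (x$k)) * h$k)) (at x)"
    by (rule has_derivative_sum) (rule d)
  moreover have "(\<lambda>h. \<Sum>k\<in>UNIV. (real p * \<bar>x$k\<bar>^(p-1) * sgn (x$k)) * h$k) = (\<lambda>h. real p * (wvec p x \<bullet> h))"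
    by (auto simp: wvec_def inner_vec_def sum_distrib_left mult_ac)
  ultimately show ?thesis by simp
qed

lemma S_pos:
  fixes x :: "real^'n::finite"
  assumes "x \<noteq> 0" "p \<ge> 1"
  shows "(\<Sum>k\<in>UNIV. \<bar>x$k\<bar>^p) > 0"
proof -
  obtain k where k: "x$k \<noteq> 0" using assms(1) by (metis vec_eq_iff zero_index)
  have "0 < \<bar>x$k\<bar>^p" using k by simp
  also have "\<dots> \<le> (\<Sum>k\<in>UNIV. \<bar>x$k\<bar>^p)"
    by (rule member_le_sum) auto
  finally show ?thesis .
qed

lemma wvec_x:
  fixes x :: "real^'n::finite"
  assumes "p \<ge> 1"
  shows "wvec p x \<bullet> x = (\<Sum>k\<in>UNIV. \<bar>x$k\<bar>^p)"
proof -
  have "\<bar>t\<bar>^(p-1) * sgn t * t = \<bar>t\<bar>^p" for t :: real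
  proof -
    have "sgn t * t = \<bar>t\<bar>" by (simp add: abs_if sgn_if)
    then have "\<bar>t\<bar>^(p-1) * sgn t * t = \<bar>t\<bar>^(p-1) * \<bar>t\<bar>" by (simp add: mult.assoc)
    also have "\<dots> = \<bar>t\<bar>^p" using assms by (metis power_minus_mult not_one_le_zero neq0_conv)
    finally show ?thesis .
  qed
  then show ?thesis by (simp add: wvec_def inner_vec_def)
qed

lemma pnorm_pow:
  fixes x :: "real^'n::finite"
  assumes "x \<noteq> 0" "p \<ge> 1"
  shows "pnorm p x ^ p = (\<Sum>k\<in>UNIV. \<bar>x$k\<bar>^p)" "pnorm p x > 0"
proof -
  have S: "(\<Sum>k\<in>UNIV. \<bar>x$k\<bar>^p) > 0" by (rule S_pos[OF assms])
  show "pnorm p x ^ p = (\<Sum>k\<in>UNIV. \<bar>x$k\<bar>^p)"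
    unfolding pnorm_def using S assms(2)
    by (simp add: powr_realpow[symmetric] powr_powr)
  show "pnorm p x > 0" unfolding pnorm_def using S by simp
qed

lemma N_deriv:
  fixes x :: "real^'n::finite"
  assumes "x \<noteq> 0" "p \<ge> 2"
  shows "((\<lambda>x. pnorm p x) has_derivative
     (\<lambda>h. pnorm p x * (0 * ln (\<Sum>k\<in>UNIV. \<bar>x$k\<bar>^p) + real p * (wvec p x \<bullet> h) * (1 / real p) / (\<Sum>k\<in>UNIV. \<bar>x$k\<bar>^p)))) (at x)"
  unfolding pnorm_def
  by (rule has_derivative_powr[OF S_deriv[OF assms(2)] has_derivative_const]) (use S_pos[OF assms(1)] assms(2) in auto)

lemma f_deriv:
  fixes x :: "real^'n::finite"
  assumes "x \<noteq> 0" "p \<ge> 2" "r \<ge> 1"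
  shows "(hyp_f r p E s has_derivative (\<lambda>h. hyp_grad r p E s x \<bullet> h)) (at x)"
proof -
  define N where "N = pnorm p x"
  define S where "S = (\<Sum>k\<in>UNIV. \<bar>x$k\<bar>^p)"
  have Np: "N > 0" "N ^ p = S" using pnorm_pow[OF assms(1)] assms(2) by (auto simp: N_def S_def)
  have Nr: "N ^ r \<noteq> 0" using Np by simp
  have D: "((\<lambda>x. fact (r - 1) * tensor_form r E s x / pnorm p x ^ r) has_derivative
    (\<lambda>h. - (fact (r - 1) * tensor_form r E s x) *
            (inverse (pnorm p x ^ r) * (of_nat r * (pnorm p x * (0 * ln S + real p * (wvec p x \<bullet> h) * (1 / real p) / S)) * pnorm p x ^ (r - 1)) * inverse (pnorm p x ^ r)) +
          fact (r - 1) * (real r * (tensor_vec r E s x \<bullet> h)) / pnorm p x ^ r)) (at x)"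
    unfolding S_def
    by (rule has_derivative_divide[OF has_derivative_mult_right[OF tensor_deriv[OF assms(3)]]
          has_derivative_power[OF N_deriv[OF assms(1,2)]]]) (use Nr N_def in simp)
  have e: "- (fact (r - 1) * tensor_form r E s x) *
            (inverse (N ^ r) * (of_nat r * (N * (0 * ln S + real p * (wvec p x \<bullet> h) * (1 / real p) / S)) * N ^ (r - 1)) * inverse (N ^ r)) +
          fact (r - 1) * (real r * (tensor_vec r E s x \<bullet> h)) / N ^ r = hyp_grad r p E s x \<bullet> h" for h
  proof -
    have f: "fact r = real r * fact (r - 1)" using assms(3) by (metis fact_num_eq_if not_one_le_zero neq0_conv of_nat_fact)
    have nn: "N * N ^ (r - 1) = N ^ r" using assms(3) by (metis power_minus_mult not_one_le_zero neq0_conv mult.commute)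
    have "hyp_grad r p E s x \<bullet> h = fact r / N ^ r * (tensor_vec r E s x \<bullet> h - tensor_form r E s x / S * (wvec p x \<bullet> h))"
      unfolding hyp_grad_def N_def[symmetric] Np(2) wvec_def[symmetric] by (simp add: inner_diff_left)
    also have "\<dots> = - (fact (r - 1) * tensor_form r E s x) *
            (inverse (N ^ r) * (of_nat r * (N * (0 * ln S + real p * (wvec p x \<bullet> h) * (1 / real p) / S)) * N ^ (r - 1)) * inverse (N ^ r)) +
          fact (r - 1) * (real r * (tensor_vec r E s x \<bullet> h)) / N ^ r"
    proof -
      have nn': "N ^ (r - 1) = N ^ r / N" using nn Np(1) by (simp add: field_simps)
      have S0: "S \<noteq> 0" using Np by auto
      show ?thesis unfolding f nn' using Np(1) S0 assms(2) by (simp add: field_simps)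
    qed
    finally show ?thesis by simp
  qed
  show ?thesis
    using D unfolding hyp_f_def[abs_def] N_def[symmetric] e .
qed

lemma grad_orth:
  fixes x :: "real^'n::finite"
  assumes "x \<noteq> 0" "p \<ge> 2" "r \<ge> 1"
  shows "hyp_grad r p E s x \<bullet> x = 0"
proof -
  have Np: "pnorm p x > 0" "pnorm p x ^ p = (\<Sum>k\<in>UNIV. \<bar>x$k\<bar>^p)" using pnorm_pow[OF assms(1)] assms(2) by auto
  show ?thesis
    unfolding hyp_grad_def wvec_def[symmetric] using Np
    using wvec_x[of p x] S_pos[OF assms(1), of p] assms(2)
    by (simp add: inner_diff_left tensor_form_eq[OF assms(3), symmetric])
qed




theorem lemma3p4:
  fixes E :: "'n::finite set set" and s :: "'n set \<Rightarrow> real"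
    and r p :: nat and xk pk :: "real^'n" and \<alpha> :: real
  assumes "r \<ge> 2" and "p \<ge> 2"
    and "weighted_uniform_hypergraph r E s"
    and "norm xk = 1"
    and "\<alpha> > 0"
  shows "\<exists>D. ((\<lambda>a. hyp_f r p E s (x_next xk pk a)) has_real_derivative D) (at \<alpha>)
           \<and> \<alpha> * D = - (hyp_grad r p E s (x_next xk pk \<alpha>) \<bullet> xk)"
proof -
  define b where "b = xk \<bullet> pk"
  define q where "q = pk \<bullet> pk"
  define Den where "Den = (\<lambda>a::real. 4 + a^2 * q - a^2 * b^2)"
  define P where "P = (\<lambda>a::real. (2 - a * b)^2 - a^2 * q)"
  define Den' where "Den' = (\<lambda>a::real. 2 * a * (q - b^2))"
  define P' where "P' = (\<lambda>a::real. - 2 * b * (2 - a * b) - 2 * a * q)"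
  define g where "g = (\<lambda>a. P a / Den a)"
  define h where "h = (\<lambda>a::real. 4 * a / Den a)"
  define g' where "g' = (\<lambda>a. (P' a * Den a - P a * Den' a) / (Den a)^2)"
  define h' where "h' = (\<lambda>a. (4 * Den a - 4 * a * Den' a) / (Den a)^2)"
  define y :: "real \<Rightarrow> real^'n" where "y = (\<lambda>a. g a *\<^sub>R xk + h a *\<^sub>R pk)"
  have xx: "xk \<bullet> xk = 1" using assms(4) by (simp add: power2_norm_eq_inner[symmetric])
  have bq: "b^2 \<le> q"
  proof -
    have "\<bar>b\<bar> \<le> norm xk * norm pk" unfolding b_def by (rule Cauchy_Schwarz_ineq2)
    then have "\<bar>b\<bar> \<le> norm pk" using assms(4) by simp
    then have "\<bar>b\<bar>^2 \<le> (norm pk)^2" by (rule power_mono) simp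
    then show ?thesis by (simp add: q_def power2_norm_eq_inner)
  qed
  have Den_pos: "Den a > 0" for a
  proof -
    have "0 \<le> a^2 * (q - b^2)" using bq by simp
    then show ?thesis unfolding Den_def by (simp add: algebra_simps)
  qed
  have y_eq: "x_next xk pk a = y a" for a
  proof -
    have n: "(norm (a *\<^sub>R pk))^2 = a^2 * q" by (simp add: q_def power2_norm_eq_inner[symmetric] power_mult_distrib)
    show ?thesis unfolding x_next_def y_def g_def h_def n b_def[symmetric]
      by (simp add: Den_def P_def scaleR_add_right power_mult_distrib divide_inverse mult.commute)
  qed
  have dg: "(g has_real_derivative g' a) (at a)" for a
    unfolding g_def g'_def P_def Den_def P'_def Den'_def
    using Den_pos[of a] unfolding Den_def
    by (auto intro!: derivative_eq_intros simp: power2_eq_square algebra_simps)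
  have dh: "(h has_real_derivative h' a) (at a)" for a
    unfolding h_def h'_def Den_def Den'_def
    using Den_pos[of a] unfolding Den_def
    by (auto intro!: derivative_eq_intros simp: power2_eq_square algebra_simps)
  define y' where "y' = g' \<alpha> *\<^sub>R xk + h' \<alpha> *\<^sub>R pk"
  have dy: "(y has_vector_derivative y') (at \<alpha>)"
  proof -
    have 1: "((\<lambda>a. g a *\<^sub>R xk) has_vector_derivative (g \<alpha> *\<^sub>R 0 + g' \<alpha> *\<^sub>R xk)) (at \<alpha>)"
      by (rule has_vector_derivative_scaleR[OF dg has_vector_derivative_const])
    have 2: "((\<lambda>a. h a *\<^sub>R pk) has_vector_derivative (h \<alpha> *\<^sub>R 0 + h' \<alpha> *\<^sub>R pk)) (at \<alpha>)"
      by (rule has_vector_derivative_scaleR[OF dh has_vector_derivative_const])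
    from has_vector_derivative_add[OF 1 2] show ?thesis unfolding y_def y'_def by simp
  qed
  have ynz: "y \<alpha> \<noteq> 0"
  proof -
    have "y \<alpha> \<bullet> y \<alpha> = (g \<alpha>)^2 + 2 * g \<alpha> * h \<alpha> * b + (h \<alpha>)^2 * q"
      unfolding y_def by (simp add: inner_add_left inner_add_right xx b_def q_def inner_commute power2_eq_square algebra_simps)
    also have "\<dots> = ((P \<alpha>)^2 + 8 * \<alpha> * P \<alpha> * b + 16 * \<alpha>^2 * q) / (Den \<alpha>)^2"
      unfolding g_def h_def using Den_pos[of \<alpha>] by (simp add: field_simps power2_eq_square)
    also have "(P \<alpha>)^2 + 8 * \<alpha> * P \<alpha> * b + 16 * \<alpha>^2 * q = (Den \<alpha>)^2"
      unfolding P_def Den_def by (simp add: power2_eq_square algebra_simps)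
    finally have "y \<alpha> \<bullet> y \<alpha> = 1" using Den_pos[of \<alpha>] by simp
    then show ?thesis by auto
  qed
  define c where "c = (Den \<alpha> - \<alpha> * Den' \<alpha>) / Den \<alpha>"
  have key: "\<alpha> *\<^sub>R y' = c *\<^sub>R y \<alpha> - xk"
  proof -
    have e1: "\<alpha> * g' \<alpha> = c * g \<alpha> - 1"
    proof -
      have "\<alpha> * P' \<alpha> = P \<alpha> - Den \<alpha>" unfolding P_def P'_def Den_def by (simp add: power2_eq_square algebra_simps)
      then have h2: "Den \<alpha> * Den \<alpha> + \<alpha> * (Den \<alpha> * P' \<alpha>) = Den \<alpha> * P \<alpha>"
        by (metis add_diff_cancel_left' diff_add_cancel distrib_left mult.left_commute)
      then show ?thesis unfolding g'_def c_def g_def using Den_pos[of \<alpha>]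
        by (simp add: field_simps power2_eq_square)
    qed
    have e2: "\<alpha> * h' \<alpha> = c * h \<alpha>"
      unfolding h'_def c_def h_def using Den_pos[of \<alpha>] by (simp add: field_simps power2_eq_square)
    show ?thesis unfolding y'_def y_def scaleR_add_right scaleR_scaleR e1 e2
      by (simp add: scaleR_diff_left algebra_simps)
  qed
  have r1: "r \<ge> 1" using assms(1) by simp
  define G where "G = hyp_grad r p E s (y \<alpha>)"
  have fd: "(hyp_f r p E s has_derivative (\<lambda>v. G \<bullet> v)) (at (y \<alpha>))"
    unfolding G_def by (rule f_deriv[OF ynz assms(2) r1])
  have ydiff: "(y has_derivative (\<lambda>t. t *\<^sub>R y')) (at \<alpha>)"
    using dy by (simp add: has_vector_derivative_def)
  have comp: "((\<lambda>a. hyp_f r p E s (y a)) has_derivative (\<lambda>t. G \<bullet> (t *\<^sub>R y'))) (at \<alpha>)"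
    by (rule has_derivative_compose[OF ydiff fd])
  have fe: "(\<lambda>t. G \<bullet> (t *\<^sub>R y')) = (*) (G \<bullet> y')" by (auto simp: mult.commute)
  have D: "((\<lambda>a. hyp_f r p E s (x_next xk pk a)) has_real_derivative (G \<bullet> y')) (at \<alpha>)"
    using comp unfolding fe has_field_derivative_def y_eq .
  have orth: "G \<bullet> y \<alpha> = 0" unfolding G_def by (rule grad_orth[OF ynz assms(2) r1])
  have "\<alpha> * (G \<bullet> y') = G \<bullet> (\<alpha> *\<^sub>R y')" by simp
  also have "\<dots> = - (G \<bullet> xk)" unfolding key by (simp add: inner_diff_right orth)
  finally show ?thesis using D unfolding G_def y_eq by blast
qed

end
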